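(* Let $N\geqslant 1$. The map $\mathfrak{s}:\Lambda(N)\to\mathcal{S}(N)$, $(\mu,\nu)\mapsto[\mu+\bar{\nu},\nu_{1}]$, is a bijection.
   Context: A partition $\alpha=(\alpha_1\geqslant\alpha_2\geqslant\dots\geqslant\alpha_p>0)$ has length $\ell(\alpha)=p$; the empty partition $\varnothing$ has length $0$; set $\alpha_i=0$ for $i>\ell(\alpha)$, and for partitions $\alpha,\beta$ let $\alpha+\beta$ be the partition with parts $\alpha_i+\beta_i$. $\alpha'$ denotes the conjugate (transposed) partition. $\mathcal{P}(N)$ is the set of partitions with at most $N$ parts, and $\Lambda(N)$ is the set of pairs $(\mu,\nu)$ of partitions with $\ell(\mu)+\ell(\nu)\leqslant N$. $\mathcal{S}(N)$ is the set of equivalence classes $[\alpha,t]$ of $\mathcal{P}(N)\times\mathbb{Z}_{\geqslant 0}$ under the relation $(\alpha,t)\sim(\beta,u)$ iff $t-u=\alpha_i-\beta_i$ for all $i=1,\dots,N$. For nonempty $\beta\in\mathcal{P}(N)$ with $q=\ell(\beta')=\beta_1$, define $\bar\beta=(N-\beta'_q,\dots,N-\beta'_1)'$ (zero entries discarded), i.e. the complement of $\beta$ in the $N\times q$ rectangle rotated by $180^\circ$; set $\bar\varnothing=\varnothing$. *)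

theory Defs
  imports Main
begin

definition is_partition :: "nat list \<Rightarrow> bool" where
  "is_partition xs \<longleftrightarrow> sorted_wrt (\<ge>) xs \<and> 0 \<notin> set xs"

text \<open>The i-th part (1-indexed), zero beyond the length.\<close>
definition part :: "nat list \<Rightarrow> nat \<Rightarrow> nat" where
  "part xs i = (if 1 \<le> i \<and> i \<le> length xs then xs ! (i - 1) else 0)"

definition conj :: "nat list \<Rightarrow> nat list" where
  "conj xs = map (\<lambda>i. length (filter (\<lambda>a. i \<le> a) xs)) [1..<part xs 1 + 1]"

definition padd :: "nat list \<Rightarrow> nat list \<Rightarrow> nat list" where
  "padd a b = map (\<lambda>i. part a i + part b i) [1..<max (length a) (length b) + 1]"

definition parts_le :: "nat \<Rightarrow> nat list set" where
  "parts_le N = {a. is_partition a \<and> length a \<le> N}"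

definition Lambda :: "nat \<Rightarrow> (nat list \<times> nat list) set" where
  "Lambda N = {(m, n). is_partition m \<and> is_partition n \<and> length m + length n \<le> N}"

definition srel :: "nat \<Rightarrow> ((nat list \<times> nat) \<times> (nat list \<times> nat)) set" where
  "srel N = {((a, t), (b, u)). a \<in> parts_le N \<and> b \<in> parts_le N \<and>
      (\<forall>i\<in>{1..N}. int t - int u = int (part a i) - int (part b i))}"

definition Sset :: "nat \<Rightarrow> (nat list \<times> nat) set set" where
  "Sset N = (parts_le N \<times> UNIV) // srel N"

definition sclass :: "nat \<Rightarrow> nat list \<Rightarrow> nat \<Rightarrow> (nat list \<times> nat) set" where
  "sclass N a t = srel N `` {(a, t)}"

definition pbar :: "nat \<Rightarrow> nat list \<Rightarrow> nat list" where
  "pbar N b = (if b = [] then [] else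
      conj (filter (\<lambda>x. x \<noteq> 0) (map (\<lambda>x. N - x) (rev (conj b)))))"

definition frak_s :: "nat \<Rightarrow> nat list \<times> nat list \<Rightarrow> (nat list \<times> nat) set" where
  "frak_s N = (\<lambda>(m, n). sclass N (padd m (pbar N n)) (part n 1))"

end

theory Submission
  imports Defs
begin

lemma part_nth: "1 \<le> i \<Longrightarrow> i \<le> length xs \<Longrightarrow> part xs i = xs!(i-1)"
  by (simp add: part_def)
lemma part_beyond: "length xs < i \<Longrightarrow> part xs i = 0"
  by (simp add: part_def)
lemma part_0[simp]: "part xs 0 = 0"
  by (simp add: part_def)
lemma part_Nil[simp]: "part [] i = 0"
  by (simp add: part_def)

lemma part_mono:
  assumes "is_partition xs" "1 \<le> i" "i \<le> j"
  shows "part xs j \<le> part xs i"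
proof (cases "j \<le> length xs")
  case True
  have s: "sorted_wrt (\<ge>) xs" using assms(1) by (simp add: is_partition_def)
  show ?thesis
  proof (cases "i = j")
    case False
    then have "xs!(j-1) \<le> xs!(i-1)" using s True assms(2,3)
      unfolding sorted_wrt_iff_nth_less by auto
    then show ?thesis using True assms by (simp add: part_nth)
  qed simp
next
  case False then show ?thesis by (simp add: part_beyond)
qed

lemma part_pos:
  assumes "is_partition xs" "1 \<le> i" "i \<le> length xs"
  shows "0 < part xs i"
proof -
  have "xs!(i-1) \<in> set xs" using assms by auto
  moreover have "0 \<notin> set xs" using assms(1) by (simp add: is_partition_def)
  ultimately have "xs!(i-1) \<noteq> 0" by metis
  then show ?thesis using assms by (simp add: part_nth)
qed

lemma part_zero_iff:
  assumes "is_partition xs"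
  shows "part xs i = 0 \<longleftrightarrow> i = 0 \<or> length xs < i"
  using part_pos[OF assms, of i] part_beyond[of xs i] by (cases "i = 0") force+

lemma part_le_first:
  assumes "is_partition xs" "a \<in> set xs" shows "a \<le> part xs 1"
proof -
  obtain k where k: "k < length xs" "xs!k = a" using assms(2) by (auto simp: in_set_conv_nth)
  then have "part xs (k+1) = a" by (simp add: part_nth)
  then show ?thesis using part_mono[OF assms(1), of 1 "k+1"] by simp
qed

lemma partition_eqI:
  assumes "is_partition a" "is_partition b" "\<And>i. 1 \<le> i \<Longrightarrow> part a i = part b i"
  shows "a = b"
proof -
  have "length a = length b"
  proof (rule ccontr)
    assume "length a \<noteq> length b"
    then consider "length a < length b" | "length b < length a" by linarith
    then show False
    proof cases
      case 1
      then show False using assms(3)[of "length b"] part_zero_iff[OF assms(1), of "length b"]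
        part_zero_iff[OF assms(2), of "length b"] by auto
    next
      case 2
      then show False using assms(3)[of "length a"] part_zero_iff[OF assms(1), of "length a"]
        part_zero_iff[OF assms(2), of "length a"] by auto
    qed
  qed
  moreover have "a!k = b!k" if "k < length a" for k
    using assms(3)[of "k+1"] that \<open>length a = length b\<close> by (simp add: part_nth)
  ultimately show ?thesis by (simp add: nth_equalityI)
qed

lemma partition_eqI_N:
  assumes "is_partition a" "is_partition b" "length a \<le> N" "length b \<le> N"
    "\<And>i. 1 \<le> i \<Longrightarrow> i \<le> N \<Longrightarrow> part a i = part b i"
  shows "a = b"
  apply (rule partition_eqI[OF assms(1,2)])
  subgoal for i using assms(3,4) assms(5)[of i] by (cases "i \<le> N") (auto simp: part_beyond)
  done

lemma length_padd: "length (padd a b) = max (length a) (length b)"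
  unfolding padd_def by (simp del: upt_Suc)

lemma part_padd: "part (padd a b) i = part a i + part b i"
proof (cases "1 \<le> i \<and> i \<le> max (length a) (length b)")
  case True
  then have "part (padd a b) i = padd a b ! (i-1)" by (simp add: part_nth length_padd)
  also have "\<dots> = part a i + part b i" unfolding padd_def using True
    by (subst nth_map) (auto simp del: upt_Suc simp: nth_upt)
  finally show ?thesis .
next
  case False
  show ?thesis
  proof (cases "i = 0")
    case False
    then have "length (padd a b) < i" "length a < i" "length b < i"
      using \<open>\<not> (1 \<le> i \<and> i \<le> max (length a) (length b))\<close> by (auto simp: length_padd)
    then show ?thesis by (simp add: part_beyond)
  qed simp
qed


lemma padd_partition:
  assumes "is_partition a" "is_partition b"
  shows "is_partition (padd a b)"
proof -
  let ?p = "padd a b"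
  have "sorted_wrt (\<ge>) ?p"
    unfolding sorted_wrt_iff_nth_less
  proof (intro allI impI)
    fix i j assume "i < j" "j < length ?p"
    then have "?p!i = part ?p (i+1)" "?p!j = part ?p (j+1)" by (simp_all add: part_nth)
    then show "?p!j \<le> ?p!i" using part_mono[OF assms(1), of "i+1" "j+1"]
      part_mono[OF assms(2), of "i+1" "j+1"] \<open>i < j\<close> by (simp add: part_padd)
  qed
  moreover have "0 \<notin> set ?p"
  proof
    assume "0 \<in> set ?p"
    then obtain k where k: "k < length ?p" "?p!k = 0" by (auto simp: in_set_conv_nth)
    then have "part ?p (k+1) = 0" by (simp add: part_nth)
    then have "part a (k+1) = 0" "part b (k+1) = 0" by (simp_all add: part_padd)
    then show False using k(1) part_zero_iff[OF assms(1), of "k+1"] part_zero_iff[OF assms(2), of "k+1"]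
      by (auto simp: length_padd)
  qed
  ultimately show ?thesis by (simp add: is_partition_def)
qed

lemma length_conj: "length (conj xs) = part xs 1"
  unfolding conj_def by (simp del: upt_Suc)

lemma cnt_antimono: "(i::nat) \<le> j \<Longrightarrow> length (filter (\<lambda>a. j \<le> a) xs) \<le> length (filter (\<lambda>a. i \<le> a) xs)"
proof (induction xs)
  case (Cons a xs) then show ?case using le_trans[of i j a] by auto
qed simp

lemma part_conj:
  assumes "is_partition xs" "1 \<le> j"
  shows "part (conj xs) j = length (filter (\<lambda>a. j \<le> a) xs)"
proof (cases "j \<le> part xs 1")
  case True
  then have "part (conj xs) j = conj xs ! (j-1)" using assms by (simp add: part_nth length_conj)
  also have "\<dots> = length (filter (\<lambda>a. j \<le> a) xs)" unfolding conj_def using True assms(2)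
    by (subst nth_map) (auto simp del: upt_Suc simp: nth_upt)
  finally show ?thesis .
next
  case False
  then have "filter (\<lambda>a. j \<le> a) xs = []" using part_le_first[OF assms(1)]
    by (auto simp: filter_empty_conv) (meson le_trans)
  then show ?thesis using False by (simp add: part_beyond length_conj)
qed

lemma conj_partition:
  assumes "is_partition xs"
  shows "is_partition (conj xs)"
proof -
  let ?c = "conj xs"
  have "sorted_wrt (\<ge>) ?c"
    unfolding sorted_wrt_iff_nth_less
  proof (intro allI impI)
    fix i j assume "i < j" "j < length ?c"
    then have "?c!i = part ?c (i+1)" "?c!j = part ?c (j+1)" by (simp_all add: part_nth)
    then show "?c!j \<le> ?c!i" using \<open>i < j\<close> cnt_antimono[of "i+1" "j+1" xs]
      by (simp add: part_conj[OF assms])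
  qed
  moreover have "0 \<notin> set ?c"
  proof
    assume "0 \<in> set ?c"
    then obtain k where k: "k < length ?c" "?c!k = 0" by (auto simp: in_set_conv_nth)
    then have "part ?c (k+1) = 0" by (simp add: part_nth)
    then have "length (filter (\<lambda>a. k+1 \<le> a) xs) = 0" by (simp add: part_conj[OF assms])
    moreover have "k + 1 \<le> part xs 1" using k(1) by (simp add: length_conj)
    then have "1 \<le> length xs" by (metis Suc_eq_plus1 le0 not_less_eq_eq part_beyond le_antisym
       Suc_le_lessD One_nat_def length_0_conv list.size(3) part_Nil)
    then have "part xs 1 \<in> set (filter (\<lambda>a. k+1 \<le> a) xs)"
    proof -
      have "xs!0 \<in> set xs" using \<open>1 \<le> length xs\<close> by (intro nth_mem) linarith
      then show ?thesis using \<open>k + 1 \<le> part xs 1\<close> \<open>1 \<le> length xs\<close> by (auto simp: part_nth)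
    qed
    ultimately show False by simp
  qed
  ultimately show ?thesis by (simp add: is_partition_def)
qed

lemma cnt_le_iff:
  assumes "is_partition b" "1 \<le> j"
  shows "length (filter (\<lambda>a. j \<le> a) b) \<le> m \<longleftrightarrow> part b (m+1) < j"
proof -
  have s: "sorted_wrt (\<ge>) b" using assms by (simp add: is_partition_def)
  let ?S = "{k. k < length b \<and> j \<le> b!k}"
  have eq: "length (filter (\<lambda>a. j \<le> a) b) = card ?S" by (simp add: length_filter_conv_card)
  show ?thesis
  proof
    assume "length (filter (\<lambda>a. j \<le> a) b) \<le> m"
    show "part b (m+1) < j"
    proof (rule ccontr)
      assume "\<not> part b (m+1) < j"
      then have j: "j \<le> part b (m+1)" by simp
      show False
      proof (cases "m + 1 \<le> length b")
        case True
        have "{0..m} \<subseteq> ?S"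
        proof
          fix k assume "k \<in> {0..m}"
          then have "part b (m+1) \<le> part b (k+1)" using part_mono[OF assms(1), of "k+1" "m+1"] by simp
          then show "k \<in> ?S" using \<open>k \<in> {0..m}\<close> True j by (auto simp: part_nth)
        qed
        then have "card {0..m} \<le> card ?S" by (intro card_mono) auto
        then show False using \<open>length (filter (\<lambda>a. j \<le> a) b) \<le> m\<close> eq by simp
      next
        case False
        then show False using j assms(2) part_beyond[of b "m+1"] by simp
      qed
    qed
  next
    assume a: "part b (m+1) < j"
    have "?S \<subseteq> {0..<m}"
    proof
      fix k assume k: "k \<in> ?S"
      show "k \<in> {0..<m}"
      proof (rule ccontr)
        assume "k \<notin> {0..<m}"
        then have "part b (k+1) \<le> part b (m+1)" using part_mono[OF assms(1), of "m+1" "k+1"] by simp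
        then show False using k a by (auto simp: part_nth)
      qed
    qed
    then have "card ?S \<le> m" using card_mono[of "{0..<m}" ?S] by simp
    then show "length (filter (\<lambda>a. j \<le> a) b) \<le> m" using eq by simp
  qed
qed

lemma count_gt_upt: "length (filter (\<lambda>j. r < j) [1..<q+1]) = q - (r::nat)"
proof -
  have "length (filter (\<lambda>j. r < j) [1..<q+1]) = card ({j. r < j} \<inter> set [1..<q+1])"
    by (rule distinct_length_filter) simp
  also have "{j. r < j} \<inter> set [1..<q+1] = {r+1..<q+1}" by auto
  finally show ?thesis by simp
qed

lemma part_le_N: "(\<forall>a\<in>set c. a \<le> N) \<Longrightarrow> part c i \<le> N"
  by (auto simp: part_def)

lemma pbar_props:
  assumes b: "is_partition b" "b \<noteq> []" "length b \<le> N"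
  shows "is_partition (pbar N b)" "length (pbar N b) \<le> N"
    "\<And>i. 1 \<le> i \<Longrightarrow> i \<le> N \<Longrightarrow> part (pbar N b) i = part b 1 - part b (N+1-i)"
proof -
  define c where "c = filter (\<lambda>x. x \<noteq> 0) (map (\<lambda>x. N - x) (rev (conj b)))"
  have pb: "pbar N b = conj c" using b(2) by (simp add: pbar_def c_def)
  have sc: "sorted_wrt (\<ge>) (conj b)" using conj_partition[OF b(1)] by (simp add: is_partition_def)
  have "sorted_wrt (\<ge>) (map (\<lambda>x. N - x) (rev (conj b)))"
    unfolding sorted_wrt_map sorted_wrt_rev
    by (rule sorted_wrt_mono_rel[OF _ sc]) auto
  then have hc: "is_partition c" unfolding c_def is_partition_def
    by (auto intro: sorted_wrt_filter)
  show "is_partition (pbar N b)" using conj_partition[OF hc] pb by simp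
  have "\<forall>a\<in>set c. a \<le> N" by (auto simp: c_def)
  then show "length (pbar N b) \<le> N" using pb length_conj part_le_N by metis
  fix i assume i: "1 \<le> i" "i \<le> N"
  let ?q = "part b 1"
  have "part (pbar N b) i = length (filter (\<lambda>a. i \<le> a) c)" using pb part_conj[OF hc i(1)] by simp
  also have "\<dots> = length (filter (\<lambda>a. i \<le> N - a) (conj b))"
  proof -
    have "filter (\<lambda>a. i \<le> a) c = filter (\<lambda>a. i \<le> a) (map (\<lambda>x. N - x) (rev (conj b)))"
      unfolding c_def filter_filter using i(1) by (intro filter_cong) auto
    also have "\<dots> = map (\<lambda>x. N - x) (filter (\<lambda>a. i \<le> N - a) (rev (conj b)))"
      by (simp add: filter_map comp_def)
    finally show ?thesis by (simp add: rev_filter[symmetric])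
  qed
  also have "\<dots> = length (filter (\<lambda>j. i \<le> N - length (filter (\<lambda>a. j \<le> a) b)) [1..<?q+1])"
    unfolding conj_def filter_map by (simp add: comp_def del: upt_Suc)
  also have "filter (\<lambda>j. i \<le> N - length (filter (\<lambda>a. j \<le> a) b)) [1..<?q+1]
      = filter (\<lambda>j. part b (N-i+1) < j) [1..<?q+1]"
  proof (rule filter_cong[OF refl])
    fix j assume "j \<in> set [1..<?q+1]"
    then have "1 \<le> j" by (simp del: upt_Suc)
    have "i \<le> N - length (filter (\<lambda>a. j \<le> a) b) \<longleftrightarrow> length (filter (\<lambda>a. j \<le> a) b) \<le> N - i"
      using i by linarith
    then show "(i \<le> N - length (filter (\<lambda>a. j \<le> a) b)) = (part b (N-i+1) < j)"
      using cnt_le_iff[OF b(1) \<open>1 \<le> j\<close>, of "N-i"] by simp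
  qed
  also have "length \<dots> = ?q - part b (N-i+1)" by (rule count_gt_upt)
  moreover have "N - i + 1 = N + 1 - i" using i by simp
  ultimately show "part (pbar N b) i = part b 1 - part b (N+1-i)" by metis
qed

lemma part_Cons: "part (x#xs) i = (if i = 0 then 0 else if i = 1 then x else part xs (i-1))"
  by (cases i) (auto simp: part_def nth_Cons')

lemma part_all_zero: "\<forall>a\<in>set xs. a = (0::nat) \<Longrightarrow> part xs i = 0"
  by (auto simp: part_def)

lemma part_filter_nz: "sorted_wrt (\<ge>) xs \<Longrightarrow> part (filter (\<lambda>x. x \<noteq> 0) xs) i = part xs (i::nat)"
proof (induction xs arbitrary: i)
  case (Cons x xs)
  show ?case
  proof (cases "x = 0")
    case True
    then have z: "\<forall>a\<in>set (x#xs). a = 0" using Cons.prems by auto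
    then have "filter (\<lambda>x. x \<noteq> 0) (x#xs) = []" by (simp add: filter_empty_conv)
    then show ?thesis using part_all_zero[OF z] by simp
  next
    case False
    then show ?thesis using Cons by (simp add: part_Cons)
  qed
qed simp

definition mk :: "(nat \<Rightarrow> nat) \<Rightarrow> nat \<Rightarrow> nat list" where
  "mk f n = filter (\<lambda>x. x \<noteq> 0) (map f [1..<n+1])"

lemma mk_props:
  assumes mono0: "\<forall>i j. 1 \<le> i \<longrightarrow> i \<le> j \<longrightarrow> j \<le> n \<longrightarrow> f j \<le> f i"
  shows "is_partition (mk f n)" "length (mk f n) \<le> n"
    "\<And>i. 1 \<le> i \<Longrightarrow> i \<le> n \<Longrightarrow> part (mk f n) i = f i"
    "\<And>i. n < i \<Longrightarrow> part (mk f n) i = 0"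
proof -
  let ?l = "map f [1..<n+1]"
  have mono: "f j \<le> f i" if "1 \<le> i" "i \<le> j" "j \<le> n" for i j using mono0 that by blast
  have s: "sorted_wrt (\<ge>) ?l" unfolding sorted_wrt_iff_nth_less
    by (auto simp del: upt_Suc simp: nth_upt intro!: mono)
  show "is_partition (mk f n)" unfolding mk_def is_partition_def
    using sorted_wrt_filter[OF s] by simp
  show "length (mk f n) \<le> n" unfolding mk_def
    using length_filter_le[of _ ?l] by (simp del: upt_Suc)
  fix i
  have pl: "part ?l i = (if 1 \<le> i \<and> i \<le> n then f i else 0)"
    by (auto simp del: upt_Suc simp: part_def nth_upt)
  show "1 \<le> i \<Longrightarrow> i \<le> n \<Longrightarrow> part (mk f n) i = f i"
    unfolding mk_def part_filter_nz[OF s] pl by simp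
  show "n < i \<Longrightarrow> part (mk f n) i = 0"
    unfolding mk_def part_filter_nz[OF s] pl by simp
qed

lemma equiv_srel: "equiv (parts_le N \<times> UNIV) (srel N)"
  unfolding equiv_def refl_on_def sym_def trans_def srel_def
  apply auto
  subgoal premises p for a b aa ba ab bb i
    using p(3) p(5) p(6,7) by force
  done

lemma Sset_char: "X \<in> Sset N \<longleftrightarrow> (\<exists>a t. a \<in> parts_le N \<and> X = sclass N a t)"
  unfolding Sset_def quotient_def sclass_def by auto

lemma sclass_eq:
  assumes "a \<in> parts_le N" "b \<in> parts_le N"
  shows "sclass N a t = sclass N b u \<longleftrightarrow>
    (\<forall>i\<in>{1..N}. int t - int u = int (part a i) - int (part b i))"
  unfolding sclass_def using eq_equiv_class_iff[OF equiv_srel, of "(a,t)" N "(b,u)"] assms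
  by (simp add: srel_def)

lemma pbar_Nil[simp]: "pbar N [] = []"
  by (simp add: pbar_def)

lemma is_partition_Nil[simp]: "is_partition []"
  by (simp add: is_partition_def)

lemma padd_Nil: "is_partition m \<Longrightarrow> padd m [] = m"
  by (rule partition_eqI) (simp_all add: padd_partition part_padd)

lemma alpha_in:
  assumes "(m, n) \<in> Lambda N"
  shows "padd m (pbar N n) \<in> parts_le N"
proof (cases "n = []")
  case True
  then show ?thesis using assms by (auto simp: Lambda_def parts_le_def padd_Nil)
next
  case False
  have m: "is_partition m" "is_partition n" "length m + length n \<le> N" using assms by (auto simp: Lambda_def)
  then have "length n \<le> N" by simp
  note pb = pbar_props[OF m(2) False this]
  show ?thesis using padd_partition[OF m(1) pb(1)] pb(2) m(3)
    by (simp add: parts_le_def length_padd)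
qed

lemma decode:
  assumes "(m, n) \<in> Lambda N" "n \<noteq> []"
  defines "\<alpha> \<equiv> padd m (pbar N n)" and "t \<equiv> part n 1"
  shows "1 \<le> t" "part \<alpha> N = 0"
    "\<And>i. 1 \<le> i \<Longrightarrow> i \<le> N \<Longrightarrow> part \<alpha> i < t \<longleftrightarrow> N - length n < i"
    "\<And>i. 1 \<le> i \<Longrightarrow> i \<le> N - length n \<Longrightarrow> part m i = part \<alpha> i - t"
    "\<And>k. 1 \<le> k \<Longrightarrow> k \<le> length n \<Longrightarrow> part n k = t - part \<alpha> (N+1-k)"
    "1 \<le> length n" "length n \<le> N" "length m \<le> N - length n"
proof -
  have m: "is_partition m" "is_partition n" "length m + length n \<le> N" using assms(1) by (auto simp: Lambda_def)
  then have lnN: "length n \<le> N" by simp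
  note pb = pbar_props[OF m(2) assms(2) lnN]
  show ln1: "1 \<le> length n" using assms(2) by (cases n) auto
  show "length n \<le> N" by fact
  show lm: "length m \<le> N - length n" using m(3) by simp
  show t1: "1 \<le> t" unfolding t_def using part_pos[OF m(2), of 1] ln1 by simp
  have pa: "part \<alpha> i = part m i + (t - part n (N+1-i))" if "1 \<le> i" "i \<le> N" for i
    unfolding \<alpha>_def t_def part_padd pb(3)[OF that] ..
  have nle: "part n k \<le> t" for k
    unfolding t_def using part_mono[OF m(2), of 1 k] by (cases k) auto
  have lo: "part \<alpha> i = part m i + t" if "1 \<le> i" "i \<le> N - length n" for i
  proof -
    have "part n (N+1-i) = 0" using that by (intro part_beyond) linarith
    then show ?thesis using pa[of i] that by simp
  qed
  have hi: "part \<alpha> i = t - part n (N+1-i)" "0 < part n (N+1-i)"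
    if "N - length n < i" "i \<le> N" for i
  proof -
    have "part m i = 0" using that lm by (intro part_beyond) linarith
    then show "part \<alpha> i = t - part n (N+1-i)" using pa[of i] that by simp
    show "0 < part n (N+1-i)" using that by (intro part_pos[OF m(2)]) linarith+
  qed
  show "part \<alpha> N = 0" using hi[of N] ln1 lnN t_def by simp
  show "part \<alpha> i < t \<longleftrightarrow> N - length n < i" if "1 \<le> i" "i \<le> N" for i
  proof (cases "N - length n < i")
    case True then show ?thesis using hi[OF True that(2)] t1 nle[of "N+1-i"] by simp
  next
    case False then show ?thesis using lo[of i] that by simp
  qed
  show "part m i = part \<alpha> i - t" if "1 \<le> i" "i \<le> N - length n" for i
    using lo[OF that] by simp
  show "part n k = t - part \<alpha> (N+1-k)" if "1 \<le> k" "k \<le> length n" for k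
  proof -
    have e: "N + 1 - (N+1-k) = k" using that lnN by simp
    show ?thesis using hi[of "N+1-k"] that lnN nle[of k] unfolding e by simp
  qed
qed

lemma frak_inj:
  assumes N: "N \<ge> 1"
  shows "inj_on (frak_s N) (Lambda N)"
proof (rule inj_onI)
  fix x y assume x: "x \<in> Lambda N" and y: "y \<in> Lambda N" and eq: "frak_s N x = frak_s N y"
  obtain m n where xe: "x = (m, n)" by (cases x)
  obtain m' n' where ye: "y = (m', n')" by (cases y)
  note x = x[unfolded xe] and y = y[unfolded ye]
  define \<alpha> where "\<alpha> = padd m (pbar N n)"
  define \<alpha>' where "\<alpha>' = padd m' (pbar N n')"
  define t where "t = part n 1"
  define t' where "t' = part n' 1"
  have rel: "\<forall>i\<in>{1..N}. int t - int t' = int (part \<alpha> i) - int (part \<alpha>' i)"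
  proof -
    have "sclass N \<alpha> t = sclass N \<alpha>' t'" using eq unfolding xe ye frak_s_def \<alpha>_def \<alpha>'_def t_def t'_def by simp
    then show ?thesis using sclass_eq[OF alpha_in[OF x] alpha_in[OF y]] unfolding \<alpha>_def \<alpha>'_def by blast
  qed
  have pm: "is_partition m" "is_partition n" "length m + length n \<le> N" using x by (auto simp: Lambda_def)
  have pm': "is_partition m'" "is_partition n'" "length m' + length n' \<le> N" using y by (auto simp: Lambda_def)
  have NN: "N \<in> {1..N}" using N by simp
  consider "n = []" "n' = []" | "n \<noteq> []" "n' = []" | "n = []" "n' \<noteq> []" | "n \<noteq> []" "n' \<noteq> []"
    by blast
  then show "x = y"
  proof cases
    case 1
    have "m = m'"
    proof (rule partition_eqI_N[OF pm(1) pm'(1)])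
      show "length m \<le> N" "length m' \<le> N" using pm(3) pm'(3) by simp_all
      fix i assume "1 \<le> i" "i \<le> N"
      then show "part m i = part m' i" using rel 1 pm(1) pm'(1)
        by (auto simp: \<alpha>_def \<alpha>'_def t_def t'_def padd_Nil)
    qed
    then show ?thesis using 1 xe ye by simp
  next
    case 2
    have "1 \<le> t" "part \<alpha> N = 0" using decode(1,2)[OF x 2(1)] unfolding \<alpha>_def t_def by simp_all
    moreover have "t' = 0" using 2 by (simp add: t'_def)
    ultimately show ?thesis using rel[rule_format, OF NN] by simp
  next
    case 3
    have "1 \<le> t'" "part \<alpha>' N = 0" using decode(1,2)[OF y 3(2)] unfolding \<alpha>'_def t'_def by simp_all
    moreover have "t = 0" using 3 by (simp add: t_def)
    ultimately show ?thesis using rel[rule_format, OF NN] by simp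
  next
    case 4
    note d = decode[OF x 4(1), folded \<alpha>_def t_def]
    note d' = decode[OF y 4(2), folded \<alpha>'_def t'_def]
    have tt: "t = t'" using rel[rule_format, OF NN] d(2) d'(2) by simp
    have aa: "part \<alpha> i = part \<alpha>' i" if "1 \<le> i" "i \<le> N" for i
      using rel[rule_format, of i] that tt by simp
    have le1: "length n \<le> length n'"
    proof -
      let ?i = "N - length n + 1"
      have i: "1 \<le> ?i" "?i \<le> N" using d(6,7) by auto
      then have "part \<alpha> ?i < t" using d(3)[OF i] by simp
      then have "part \<alpha>' ?i < t'" using aa[OF i] tt by simp
      then show ?thesis using d'(3)[OF i] d(7) by simp
    qed
    have le2: "length n' \<le> length n"
    proof -
      let ?i = "N - length n' + 1"
      have i: "1 \<le> ?i" "?i \<le> N" using d'(6,7) by auto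
      then have "part \<alpha>' ?i < t'" using d'(3)[OF i] by simp
      then have "part \<alpha> ?i < t" using aa[OF i] tt by simp
      then show ?thesis using d(3)[OF i] d'(7) by simp
    qed
    have ll: "length n = length n'" using le1 le2 by simp
    have "m = m'"
    proof (rule partition_eqI_N[OF pm(1) pm'(1) d(8)])
      show "length m' \<le> N - length n" using d'(8) ll by simp
      fix i assume "1 \<le> i" "i \<le> N - length n"
      then show "part m i = part m' i" using d(4) d'(4) ll aa tt by simp
    qed
    moreover have "n = n'"
    proof (rule partition_eqI_N[OF pm(2) pm'(2), of "length n"])
      show "length n \<le> length n" "length n' \<le> length n" using ll by simp_all
      fix k assume k: "1 \<le> k" "k \<le> length n"
      have "1 \<le> N + 1 - k" "N + 1 - k \<le> N" using k d(7) by auto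
      then show "part n k = part n' k" using d(5)[OF k] d'(5) k ll aa tt by simp
    qed
    ultimately show ?thesis using xe ye by simp
  qed
qed

lemma frak_surj:
  assumes N: "N \<ge> 1"
  shows "frak_s N ` Lambda N = Sset N"
proof
  show "frak_s N ` Lambda N \<subseteq> Sset N"
  proof
    fix X assume "X \<in> frak_s N ` Lambda N"
    then obtain m n where mn: "(m, n) \<in> Lambda N" "X = frak_s N (m, n)" by auto
    then show "X \<in> Sset N" using alpha_in[OF mn(1)] unfolding Sset_char frak_s_def by auto
  qed
next
  show "Sset N \<subseteq> frak_s N ` Lambda N"
  proof
    fix X assume "X \<in> Sset N"
    then obtain a t where a: "a \<in> parts_le N" and X: "X = sclass N a t" unfolding Sset_char by blast
    have pa: "is_partition a" "length a \<le> N" using a by (auto simp: parts_le_def)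
    define s where "s = part a N"
    have ge_s: "s \<le> part a i" if "i \<le> N" "1 \<le> i" for i
      unfolding s_def using part_mono[OF pa(1) that(2,1)] .
    show "X \<in> frak_s N ` Lambda N"
    proof (cases "t \<le> s")
      case True
      define m where "m = mk (\<lambda>i. part a i - t) N"
      have mono: "\<forall>i j. 1 \<le> i \<longrightarrow> i \<le> j \<longrightarrow> j \<le> N \<longrightarrow> part a j - t \<le> part a i - t"
        using part_mono[OF pa(1)] by (simp add: diff_le_mono)
      note mp = mk_props[of N "\<lambda>i. part a i - t", OF mono, folded m_def]
      have inL: "(m, []) \<in> Lambda N" using mp(1,2) by (simp add: Lambda_def)
      have "frak_s N (m, []) = sclass N m 0" using mp(1) by (simp add: frak_s_def padd_Nil)
      also have "\<dots> = sclass N a t"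
      proof (subst sclass_eq)
        show "m \<in> parts_le N" using mp(1,2) by (simp add: parts_le_def)
        show "a \<in> parts_le N" by fact
        show "\<forall>i\<in>{1..N}. int 0 - int t = int (part m i) - int (part a i)"
          using mp(3) ge_s True by force
      qed
      finally show ?thesis using inL X by blast
    next
      case False
      then have t1: "1 \<le> t" by simp
      define L where "L = length (filter (\<lambda>x. t \<le> x) a)"
      have thr: "t \<le> part a i \<longleftrightarrow> i \<le> L" if "1 \<le> i" for i
        using cnt_le_iff[OF pa(1) t1, of "i-1"] that unfolding L_def by auto
      have LN: "L < N" using thr[of N] N False unfolding s_def by linarith
      define p where "p = N - L"
      define m where "m = mk (\<lambda>i. part a i - t) L"
      define n where "n = mk (\<lambda>k. t - part a (N+1-k)) p"
      have mono: "\<forall>i j. 1 \<le> i \<longrightarrow> i \<le> j \<longrightarrow> j \<le> L \<longrightarrow> part a j - t \<le> part a i - t"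
        using part_mono[OF pa(1)] by (simp add: diff_le_mono)
      note mp = mk_props[of L "\<lambda>i. part a i - t", OF mono, folded m_def]
      have mono2: "\<forall>i j. 1 \<le> i \<longrightarrow> i \<le> j \<longrightarrow> j \<le> p \<longrightarrow> t - part a (N+1-j) \<le> t - part a (N+1-i)"
      proof (intro allI impI)
        fix i j assume that: "1 \<le> i" "i \<le> j" "j \<le> p"
        have "part a (N+1-i) \<le> part a (N+1-j)" using that p_def
          by (intro part_mono[OF pa(1)]) auto
        then show "t - part a (N+1-j) \<le> t - part a (N+1-i)" by simp
      qed
      note np = mk_props[of p "\<lambda>k. t - part a (N+1-k)", OF mono2, folded n_def]
      have p1: "1 \<le> p" using LN p_def by simp
      have n1: "part n 1 = t - s" using np(3)[OF le_refl p1] by (simp add: s_def)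
      have nne: "n \<noteq> []" using n1 False by auto
      have inL: "(m, n) \<in> Lambda N" using mp(1,2) np(1,2) p_def LN by (simp add: Lambda_def)
      have lnN: "length n \<le> N" using np(2) p_def by simp
      note pb = pbar_props[OF np(1) nne lnN]
      have alpha: "part (padd m (pbar N n)) i = part a i - s" if i: "1 \<le> i" "i \<le> N" for i
      proof -
        have e: "part (padd m (pbar N n)) i = part m i + (part n 1 - part n (N+1-i))"
          by (simp add: part_padd pb(3)[OF i])
        show ?thesis
        proof (cases "i \<le> L")
          case True
          have "part n (N+1-i) = 0" using True p_def i by (intro np(4)) linarith
          moreover have "part m i = part a i - t" using mp(3)[OF i(1) True] .
          moreover have "t \<le> part a i" using thr[OF i(1)] True by simp
          ultimately show ?thesis using e n1 False by simp
        next
          case nL: False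
          have "part m i = 0" using nL by (intro mp(4)) linarith
          moreover have "part n (N+1-i) = t - part a i"
          proof -
            have k: "1 \<le> N+1-i" "N+1-i \<le> p" using i nL p_def by auto
            have "N + 1 - (N+1-i) = i" using i by simp
            then show ?thesis using np(3)[OF k] by simp
          qed
          moreover have "part a i < t" using thr[OF i(1)] nL by simp
          moreover have "s \<le> part a i" using ge_s i by simp
          ultimately show ?thesis using e n1 False by simp
        qed
      qed
      have "frak_s N (m, n) = sclass N (padd m (pbar N n)) (t - s)" using n1 by (simp add: frak_s_def)
      also have "\<dots> = sclass N a t"
      proof (subst sclass_eq)
        show "padd m (pbar N n) \<in> parts_le N" using alpha_in[OF inL] .
        show "a \<in> parts_le N" by fact
        show "\<forall>i\<in>{1..N}. int (t - s) - int t = int (part (padd m (pbar N n)) i) - int (part a i)"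
          using alpha ge_s False by force
      qed
      finally show ?thesis using inL X by blast
    qed
  qed
qed

theorem lemma1p1:
  fixes N :: nat
  assumes "N \<ge> 1"
  shows "bij_betw (frak_s N) (Lambda N) (Sset N)"
  unfolding bij_betw_def using frak_inj[OF assms] frak_surj[OF assms] by blast

end
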